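(* Let $(A,\mu,\alpha,\beta)$ be a BiHom-associative algebra and let $\sigma,\tau,\eta,R:A\to A$ be linear maps such that $\sigma,\tau,\eta$ are algebra maps (multiplicative for $\mu$), $R$ is a $\{\sigma,\tau\}$-Rota-Baxter operator, and any two of the maps $\alpha,\beta,\sigma,\tau,\eta,R$ commute. Define operations on $A$ by $x\prec y=\sigma(x)R(\eta(y))$ and $x\succ y=R(x)\tau(\eta(y))$ for $x,y\in A$. Then $(A,\prec,\succ,\alpha\sigma,\beta\tau\eta)$ is a BiHom-dendriform algebra.
   Context: Work over a field $\Bbbk$; $\mu(x\otimes y)=xy$. A BiHom-associative algebra $(A,\mu,\alpha,\beta)$ consists of a linear space $A$, a bilinear multiplication $\mu$, and linear maps $\alpha,\beta:A\to A$ with $\alpha\beta=\beta\alpha$, $\alpha(xy)=\alpha(x)\alpha(y)$, $\beta(xy)=\beta(x)\beta(y)$ and $\alpha(x)(yz)=(xy)\beta(z)$ for all $x,y,z$. For algebra maps $\sigma,\tau$, a linear map $R$ is a $\{\sigma,\tau\}$-Rota-Baxter operator if $R(\sigma(a))R(\tau(b))=R\big(\sigma(a)R(b)+R(a)\tau(b)\big)$ for all $a,b\in A$. A BiHom-dendriform algebra $(A,\prec,\succ,\alpha',\beta')$ consists of a linear space $A$, bilinear operations $\prec,\succ$, and commuting linear maps $\alpha',\beta'$ that are multiplicative with respect to both $\prec$ and $\succ$, such that for all $x,y,z$: $(x\prec y)\prec\beta'(z)=\alpha'(x)\prec(y\prec z+y\succ z)$; $(x\succ y)\prec\beta'(z)=\alpha'(x)\succ(y\prec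 z)$; $\alpha'(x)\succ(y\succ z)=(x\prec y+x\succ y)\succ\beta'(z)$. *)

theory Defs
  imports Main HOL.Vector_Spaces
begin

definition bilinear_map :: "('k::field \<Rightarrow> 'a::ab_group_add \<Rightarrow> 'a) \<Rightarrow> ('a \<Rightarrow> 'a \<Rightarrow> 'a) \<Rightarrow> bool" where
  "bilinear_map scale m \<longleftrightarrow>
     (\<forall>x. Vector_Spaces.linear scale scale (m x)) \<and>
     (\<forall>y. Vector_Spaces.linear scale scale (\<lambda>x. m x y))"

definition multiplicative :: "('a \<Rightarrow> 'a \<Rightarrow> 'a) \<Rightarrow> ('a \<Rightarrow> 'a) \<Rightarrow> bool" where
  "multiplicative m f \<longleftrightarrow> (\<forall>x y. f (m x y) = m (f x) (f y))"

definition BiHom_assoc_algebra ::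
  "('k::field \<Rightarrow> 'a::ab_group_add \<Rightarrow> 'a) \<Rightarrow> ('a \<Rightarrow> 'a \<Rightarrow> 'a) \<Rightarrow> ('a \<Rightarrow> 'a) \<Rightarrow> ('a \<Rightarrow> 'a) \<Rightarrow> bool" where
  "BiHom_assoc_algebra scale m \<alpha> \<beta> \<longleftrightarrow>
     vector_space scale \<and> bilinear_map scale m \<and>
     Vector_Spaces.linear scale scale \<alpha> \<and> Vector_Spaces.linear scale scale \<beta> \<and>
     \<alpha> \<circ> \<beta> = \<beta> \<circ> \<alpha> \<and> multiplicative m \<alpha> \<and> multiplicative m \<beta> \<and>
     (\<forall>x y z. m (\<alpha> x) (m y z) = m (m x y) (\<beta> z))"

definition Rota_Baxter_op ::
  "('a::ab_group_add \<Rightarrow> 'a \<Rightarrow> 'a) \<Rightarrow> ('a \<Rightarrow> 'a) \<Rightarrow> ('a \<Rightarrow> 'a) \<Rightarrow> ('a \<Rightarrow> 'a) \<Rightarrow> bool" where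
  "Rota_Baxter_op m \<sigma> \<tau> R \<longleftrightarrow>
     (\<forall>a b. m (R (\<sigma> a)) (R (\<tau> b)) = R (m (\<sigma> a) (R b) + m (R a) (\<tau> b)))"

definition BiHom_dendriform_algebra ::
  "('k::field \<Rightarrow> 'a::ab_group_add \<Rightarrow> 'a) \<Rightarrow> ('a \<Rightarrow> 'a \<Rightarrow> 'a) \<Rightarrow> ('a \<Rightarrow> 'a \<Rightarrow> 'a)
     \<Rightarrow> ('a \<Rightarrow> 'a) \<Rightarrow> ('a \<Rightarrow> 'a) \<Rightarrow> bool" where
  "BiHom_dendriform_algebra scale pr su \<alpha> \<beta> \<longleftrightarrow>
     vector_space scale \<and> bilinear_map scale pr \<and> bilinear_map scale su \<and>
     Vector_Spaces.linear scale scale \<alpha> \<and> Vector_Spaces.linear scale scale \<beta> \<and>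
     \<alpha> \<circ> \<beta> = \<beta> \<circ> \<alpha> \<and>
     multiplicative pr \<alpha> \<and> multiplicative pr \<beta> \<and>
     multiplicative su \<alpha> \<and> multiplicative su \<beta> \<and>
     (\<forall>x y z. pr (pr x y) (\<beta> z) = pr (\<alpha> x) (pr y z + su y z)) \<and>
     (\<forall>x y z. pr (su x y) (\<beta> z) = su (\<alpha> x) (pr y z)) \<and>
     (\<forall>x y z. su (\<alpha> x) (su y z) = su (pr x y + su x y) (\<beta> z))"

end

theory Submission
  imports Defs
begin

lemma lin_add: "Vector_Spaces.linear s t f \<Longrightarrow> f (a+b) = f a + f b"
  by (simp add: Vector_Spaces.linear_def module_hom_def module_hom_axioms_def)

lemma lin_comp: "Vector_Spaces.linear s s f \<Longrightarrow> Vector_Spaces.linear s s g \<Longrightarrow> Vector_Spaces.linear s s (g \<circ> f)"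
  by (rule Vector_Spaces.linear_compose)

theorem mainTheorem4:
  fixes scale :: "'k::field \<Rightarrow> 'a::ab_group_add \<Rightarrow> 'a"
    and m :: "'a \<Rightarrow> 'a \<Rightarrow> 'a"
    and \<alpha> \<beta> \<sigma> \<tau> \<eta> R :: "'a \<Rightarrow> 'a"
  assumes alg: "BiHom_assoc_algebra scale m \<alpha> \<beta>"
    and lin: "Vector_Spaces.linear scale scale \<sigma>" "Vector_Spaces.linear scale scale \<tau>"
             "Vector_Spaces.linear scale scale \<eta>" "Vector_Spaces.linear scale scale R"
    and mult: "multiplicative m \<sigma>" "multiplicative m \<tau>" "multiplicative m \<eta>"
    and RB: "Rota_Baxter_op m \<sigma> \<tau> R"
    and comm: "\<forall>f\<in>{\<alpha>, \<beta>, \<sigma>, \<tau>, \<eta>, R}. \<forall>g\<in>{\<alpha>, \<beta>, \<sigma>, \<tau>, \<eta>, R}. f \<circ> g = g \<circ> f"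
  shows "BiHom_dendriform_algebra scale
           (\<lambda>x y. m (\<sigma> x) (R (\<eta> y)))
           (\<lambda>x y. m (R x) (\<tau> (\<eta> y)))
           (\<alpha> \<circ> \<sigma>) (\<beta> \<circ> \<tau> \<circ> \<eta>)"
proof -
  have c: "\<And>f g x. f \<in> {\<alpha>, \<beta>, \<sigma>, \<tau>, \<eta>, R} \<Longrightarrow> g \<in> {\<alpha>, \<beta>, \<sigma>, \<tau>, \<eta>, R} \<Longrightarrow> f (g x) = g (f x)"
    using comm by (metis comp_apply)
  note AL = alg[unfolded BiHom_assoc_algebra_def]
  have vs: "vector_space scale" and bl: "bilinear_map scale m"
    and la: "Vector_Spaces.linear scale scale \<alpha>" and lb: "Vector_Spaces.linear scale scale \<beta>"
    and ma: "\<And>x y. \<alpha> (m x y) = m (\<alpha> x) (\<alpha> y)" and mb: "\<And>x y. \<beta> (m x y) = m (\<beta> x) (\<beta> y)"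
    and as: "\<And>x y z. m (\<alpha> x) (m y z) = m (m x y) (\<beta> z)"
    using AL by (auto simp: multiplicative_def)
  have ms: "\<And>x y. \<sigma> (m x y) = m (\<sigma> x) (\<sigma> y)" and mt: "\<And>x y. \<tau> (m x y) = m (\<tau> x) (\<tau> y)"
    and me: "\<And>x y. \<eta> (m x y) = m (\<eta> x) (\<eta> y)" using mult by (auto simp: multiplicative_def)
  have rb: "\<And>a b. m (R (\<sigma> a)) (R (\<tau> b)) = R (m (\<sigma> a) (R b) + m (R a) (\<tau> b))"
    using RB by (simp add: Rota_Baxter_op_def)
  have ml1: "\<And>x. Vector_Spaces.linear scale scale (m x)" and ml2: "\<And>y. Vector_Spaces.linear scale scale (\<lambda>x. m x y)"
    using bl by (auto simp: bilinear_map_def)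
  have madd1: "\<And>x a b. m x (a+b) = m x a + m x b" using ml1 lin_add by metis
  have madd2: "\<And>x a b. m (a+b) x = m a x + m b x" using ml2 lin_add by metis
  have Radd: "\<And>a b. R (a+b) = R a + R b" using lin(4) lin_add by metis
  have eadd: "\<And>a b. \<eta> (a+b) = \<eta> a + \<eta> b" using lin(3) lin_add by metis
  have sadd: "\<And>a b. \<sigma> (a+b) = \<sigma> a + \<sigma> b" using lin(1) lin_add by metis
  have tadd: "\<And>a b. \<tau> (a+b) = \<tau> a + \<tau> b" using lin(2) lin_add by metis
  have aadd: "\<And>a b. \<alpha> (a+b) = \<alpha> a + \<alpha> b" using la lin_add by metis
  have badd: "\<And>a b. \<beta> (a+b) = \<beta> a + \<beta> b" using lb lin_add by metis
  (* orientation: push outer functions in order \<alpha> \<beta> \<sigma> \<tau> \<eta> R : outer one later in list *)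
  have o: "\<And>x. \<beta> (\<alpha> x) = \<alpha> (\<beta> x)" "\<And>x. \<sigma> (\<alpha> x) = \<alpha> (\<sigma> x)" "\<And>x. \<tau> (\<alpha> x) = \<alpha> (\<tau> x)"
     "\<And>x. \<eta> (\<alpha> x) = \<alpha> (\<eta> x)" "\<And>x. R (\<alpha> x) = \<alpha> (R x)"
     "\<And>x. \<sigma> (\<beta> x) = \<beta> (\<sigma> x)" "\<And>x. \<tau> (\<beta> x) = \<beta> (\<tau> x)"
     "\<And>x. \<eta> (\<beta> x) = \<beta> (\<eta> x)" "\<And>x. R (\<beta> x) = \<beta> (R x)"
     "\<And>x. \<tau> (\<sigma> x) = \<sigma> (\<tau> x)" "\<And>x. \<eta> (\<sigma> x) = \<sigma> (\<eta> x)" "\<And>x. R (\<sigma> x) = \<sigma> (R x)"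
     "\<And>x. \<eta> (\<tau> x) = \<tau> (\<eta> x)" "\<And>x. R (\<tau> x) = \<tau> (R x)"
     "\<And>x. R (\<eta> x) = \<eta> (R x)"
    by (auto intro: c)
  note S = o ma mb ms mt me madd1 madd2 Radd eadd sadd tadd aadd badd
  have A1: "\<And>x y z. m (\<sigma> (m (\<sigma> x) (R (\<eta> y)))) (R (\<eta> ((\<beta> \<circ> \<tau> \<circ> \<eta>) z))) =
     m (\<sigma> ((\<alpha> \<circ> \<sigma>) x)) (R (\<eta> (m (\<sigma> y) (R (\<eta> z)) + m (R y) (\<tau> (\<eta> z)))))"
  proof -
    fix x y z
    have e1: "R (\<eta> (m (\<sigma> y) (R (\<eta> z)) + m (R y) (\<tau> (\<eta> z)))) = m (R (\<sigma> (\<eta> y))) (R (\<tau> (\<eta> (\<eta> z))))"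
      using rb[of "\<eta> y" "\<eta> (\<eta> z)"] by (simp add: S)
    have e2: "m (\<alpha> (\<sigma> (\<sigma> x))) (m (R (\<sigma> (\<eta> y))) (R (\<tau> (\<eta> (\<eta> z))))) =
              m (m (\<sigma> (\<sigma> x)) (R (\<sigma> (\<eta> y)))) (\<beta> (R (\<tau> (\<eta> (\<eta> z)))))" by (rule as)
    show "?thesis x y z" unfolding e1 using e2 by (simp add: S)
  qed
  have A2: "\<And>x y z. m (\<sigma> (m (R x) (\<tau> (\<eta> y)))) (R (\<eta> ((\<beta> \<circ> \<tau> \<circ> \<eta>) z))) =
     m (R ((\<alpha> \<circ> \<sigma>) x)) (\<tau> (\<eta> (m (\<sigma> y) (R (\<eta> z)))))"
  proof -
    fix x y z
    have e2: "m (\<alpha> (R (\<sigma> x))) (m (\<tau> (\<eta> (\<sigma> y))) (R (\<tau> (\<eta> (\<eta> z))))) =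
              m (m (R (\<sigma> x)) (\<tau> (\<eta> (\<sigma> y)))) (\<beta> (R (\<tau> (\<eta> (\<eta> z)))))" by (rule as)
    show "?thesis x y z" using e2 by (simp add: S)
  qed
  have A3: "\<And>x y z. m (R ((\<alpha> \<circ> \<sigma>) x)) (\<tau> (\<eta> (m (R y) (\<tau> (\<eta> z))))) =
     m (R (m (\<sigma> x) (R (\<eta> y)) + m (R x) (\<tau> (\<eta> y)))) (\<tau> (\<eta> ((\<beta> \<circ> \<tau> \<circ> \<eta>) z)))"
  proof -
    fix x y z
    have e1: "R (m (\<sigma> x) (R (\<eta> y)) + m (R x) (\<tau> (\<eta> y))) = m (R (\<sigma> x)) (R (\<tau> (\<eta> y)))"
      using rb[of x "\<eta> y"] by simp
    have e2: "m (\<alpha> (R (\<sigma> x))) (m (R (\<tau> (\<eta> y))) (\<tau> (\<eta> (\<tau> (\<eta> z))))) =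
              m (m (R (\<sigma> x)) (R (\<tau> (\<eta> y)))) (\<beta> (\<tau> (\<eta> (\<tau> (\<eta> z)))))" by (rule as)
    show "?thesis x y z" unfolding e1 using e2 by (simp add: S)
  qed
  have lin1: "bilinear_map scale (\<lambda>x y. m (\<sigma> x) (R (\<eta> y)))"
    unfolding bilinear_map_def
  proof (intro conjI allI)
    fix x show "Vector_Spaces.linear scale scale (\<lambda>y. m (\<sigma> x) (R (\<eta> y)))"
      using lin_comp[OF lin_comp[OF lin(3) lin(4)] ml1[of "\<sigma> x"]] by (simp add: comp_def)
  next
    fix y show "Vector_Spaces.linear scale scale (\<lambda>x. m (\<sigma> x) (R (\<eta> y)))"
      using lin_comp[OF lin(1) ml2[of "R (\<eta> y)"]] by (simp add: comp_def)
  qed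
  have lin2: "bilinear_map scale (\<lambda>x y. m (R x) (\<tau> (\<eta> y)))"
    unfolding bilinear_map_def
  proof (intro conjI allI)
    fix x show "Vector_Spaces.linear scale scale (\<lambda>y. m (R x) (\<tau> (\<eta> y)))"
      using lin_comp[OF lin_comp[OF lin(3) lin(2)] ml1[of "R x"]] by (simp add: comp_def)
  next
    fix y show "Vector_Spaces.linear scale scale (\<lambda>x. m (R x) (\<tau> (\<eta> y)))"
      using lin_comp[OF lin(4) ml2[of "\<tau> (\<eta> y)"]] by (simp add: comp_def)
  qed
  have l3: "Vector_Spaces.linear scale scale (\<alpha> \<circ> \<sigma>)" using lin_comp[OF lin(1) la] .
  have l4: "Vector_Spaces.linear scale scale (\<beta> \<circ> \<tau> \<circ> \<eta>)"
    using lin_comp[OF lin(3) lin_comp[OF lin(2) lb]] by (simp add: comp_assoc)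
  have cm: "(\<alpha> \<circ> \<sigma>) \<circ> (\<beta> \<circ> \<tau> \<circ> \<eta>) = (\<beta> \<circ> \<tau> \<circ> \<eta>) \<circ> (\<alpha> \<circ> \<sigma>)"
    by (rule ext) (simp add: S)
  show ?thesis unfolding BiHom_dendriform_algebra_def multiplicative_def
    using vs lin1 lin2 l3 l4 cm A1 A2 A3 by (simp add: S)
qed

end
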